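(* Let $c>1$. If a number $x_1\in(0,1)$ satisfies $x_1\operatorname{arctanh} x_1<\frac{1+c}{2c}$, then $\Phi(c)<H(x_1,c)$.
   Context: $\operatorname{arctanh} r=\frac12\log\frac{1+r}{1-r}$. For $c\ge0$, $\Phi(c)=\sup_{0<r<1}\{r+c(1-r^2)\operatorname{arctanh} r\}$. For $x>0$ and $c$ real, $H(x,c)=\frac{1-c}{2}x+\frac{1+c}{2}x^{-1}$. *)

theory Defs
  imports Complex_Main
begin

definition arctanh :: "real \<Rightarrow> real" where
  "arctanh r = (1/2) * ln ((1 + r) / (1 - r))"

definition Phi :: "real \<Rightarrow> real" where
  "Phi c = (SUP r\<in>{0<..<1}. r + c * (1 - r^2) * arctanh r)"

definition H :: "real \<Rightarrow> real \<Rightarrow> real" where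
  "H x c = (1 - c) / 2 * x + (1 + c) / 2 * inverse x"

end

theory Submission
  imports Defs
begin

lemma arctanh_eq: "arctanh = artanh"
  by (auto simp: fun_eq_iff arctanh_def artanh_def)

lemma artanh_less:
  fixes s t :: real
  assumes "0 \<le> s" "s < t" "t < 1"
  shows "artanh s < artanh t"
proof -
  have "(1 + s) / (1 - s) < (1 + t) / (1 - t)"
    using assms by (simp add: field_simps)
  moreover have "0 < (1 + s) / (1 - s)" using assms by simp
  ultimately show ?thesis by (simp add: artanh_def)
qed

lemma artanh_pos:
  fixes r :: real
  assumes "0 < r" "r < 1"
  shows "0 < artanh r"
  using artanh_less[of 0 r] assms by simp

lemma g_less:
  fixes s t :: real
  assumes "0 < s" "s < t" "t < 1"
  shows "s * artanh s < t * artanh t"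
proof -
  have "s * artanh s < t * artanh s"
    using artanh_pos[of s] assms by (intro mult_strict_right_mono) auto
  also have "\<dots> \<le> t * artanh t"
    using artanh_less[of s t] assms by (intro mult_left_mono) auto
  finally show ?thesis .
qed

lemma F_deriv:
  fixes c r :: real
  assumes "\<bar>r\<bar> < 1"
  shows "((\<lambda>r. r + c * (1 - r^2) * artanh r) has_real_derivative
          (1 + c - 2 * c * (r * artanh r))) (at r)"
proof -
  have "r^2 < 1" using assms by (simp add: abs_square_less_1)
  hence "1 - r^2 \<noteq> 0" by simp
  have d1: "((\<lambda>r. c * (1 - r^2)) has_real_derivative c * (0 - 2 * r)) (at r)"
    by (auto intro!: derivative_eq_intros)
  have d2: "(artanh has_real_derivative (1 / (1 - r^2))) (at r)"
    using assms by (rule artanh_real_has_field_derivative)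
  have d3: "((\<lambda>r. r + c * (1 - r^2) * artanh r) has_real_derivative
      (1 + (c * (0 - 2 * r) * artanh r + 1 / (1 - r^2) * (c * (1 - r^2))))) (at r)"
    by (rule DERIV_add[OF DERIV_ident DERIV_mult[OF d1 d2]])
  have e: "1 + (c * (0 - 2 * r) * artanh r + 1 / (1 - r^2) * (c * (1 - r^2))) = 1 + c - 2 * c * (r * artanh r)"
    using \<open>1 - r^2 \<noteq> 0\<close> by (simp add: field_simps)
  show ?thesis using d3 unfolding e .
qed

theorem lemma2p5:
  fixes c x1 :: real
  assumes "c > 1" and "0 < x1" and "x1 < 1"
    and "x1 * arctanh x1 < (1 + c) / (2 * c)"
  shows "Phi c < H x1 c"
proof -
  define k where "k = (1 + c) / (2 * c)"
  define g where "g = (\<lambda>r::real. r * artanh r)"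
  define F where "F = (\<lambda>r::real. r + c * (1 - r^2) * artanh r)"
  have k: "g x1 < k" using assms(4) by (simp add: k_def g_def arctanh_eq)
  have kpos: "k > 0" using assms(1) by (simp add: k_def)
  define y where "y = max (k / x1) (artanh x1 + 1)"
  define b where "b = tanh y"
  have ypos: "y > 0" using artanh_pos[of x1] assms by (simp add: y_def)
  have b0: "0 < b" using ypos tanh_real_less_iff[of 0 y] by (simp add: b_def)
  have aby: "artanh b = y" by (simp add: b_def artanh_tanh_real)
  have xb: "x1 < b"
  proof (rule ccontr)
    assume "\<not> x1 < b"
    hence "artanh b \<le> artanh x1" using artanh_less[of b x1] b0 assms by (cases "b = x1") auto
    thus False using aby by (simp add: y_def)
  qed
  have b1: "b < 1" using tanh_real_bounds[of y] by (simp add: b_def)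
  have "g b = b * y" by (simp add: g_def b_def artanh_tanh_real)
  also have "\<dots> \<ge> x1 * (k / x1)"
    using xb assms(2) kpos by (intro mult_mono) (auto simp: y_def)
  finally have gb: "k \<le> g b" using assms(2) by simp
  have cont: "continuous_on {x1..b} g"
    unfolding g_def using assms b1 by (intro continuous_intros) auto
  obtain rs where rs: "x1 \<le> rs" "rs \<le> b" "g rs = k"
    using IVT'[of g x1 k b, OF _ gb _ cont] k xb by auto
  have rs1: "x1 < rs" using rs k by (cases "x1 = rs") auto
  have rs0: "0 < rs" "rs < 1" using rs1 rs b1 assms by auto
  have der: "\<And>r. 0 < r \<Longrightarrow> r < 1 \<Longrightarrow> (F has_real_derivative (1 + c - 2 * c * g r)) (at r)"
    unfolding F_def g_def by (rule F_deriv) auto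
  have bound: "F r \<le> F rs" if r: "0 < r" "r < 1" for r
  proof (cases "r < rs")
    case True
    obtain z where z: "r < z" "z < rs" "F rs - F r = (rs - r) * (1 + c - 2 * c * g z)"
      using MVT2[OF True, of F "\<lambda>x. 1 + c - 2 * c * g x"] der r rs0 by force
    have "g z < k" using g_less[of z rs] z r rs rs0 by (simp add: g_def)
    hence "1 + c - 2 * c * g z > 0" using assms(1) by (simp add: k_def field_simps)
    hence "(rs - r) * (1 + c - 2 * c * g z) > 0" using True by simp
    thus ?thesis using z by simp
  next
    case False
    show ?thesis
    proof (cases "r = rs")
      case False
      with \<open>\<not> r < rs\<close> have lt: "rs < r" by simp
      obtain z where z: "rs < z" "z < r" "F r - F rs = (r - rs) * (1 + c - 2 * c * g z)"
        using MVT2[OF lt, of F "\<lambda>x. 1 + c - 2 * c * g x"] der r rs0 by force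
      have "k < g z" using g_less[of rs z] z r rs rs0 by (simp add: g_def)
      hence "1 + c - 2 * c * g z < 0" using assms(1) by (simp add: k_def field_simps)
      hence "(r - rs) * (1 + c - 2 * c * g z) < 0" using lt by (simp add: mult_pos_neg)
      thus ?thesis using z by simp
    qed simp
  qed
  have "Phi c \<le> F rs"
    unfolding Phi_def arctanh_eq
    by (rule cSUP_least) (auto simp: F_def intro!: bound[unfolded F_def])
  also have "F rs = H rs c"
  proof -
    have "artanh rs = (1 + c) / (2 * c * rs)" using rs(3) rs0 assms(1) by (simp add: g_def k_def field_simps)
    hence "F rs = rs + c * (1 - rs^2) * ((1 + c) / (2 * c * rs))" by (simp add: F_def)
    also have "\<dots> = H rs c" using rs0 assms(1)
      by (simp add: H_def field_simps power2_eq_square)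
    finally show ?thesis .
  qed
  also have "H rs c < H x1 c"
  proof -
    have "(1 - c) / 2 * rs < (1 - c) / 2 * x1" using rs1 assms(1) by simp
    moreover have "(1 + c) / 2 * inverse rs < (1 + c) / 2 * inverse x1"
      using rs1 assms by (intro mult_strict_left_mono) (auto simp: field_simps)
    ultimately show ?thesis by (simp add: H_def)
  qed
  finally show ?thesis .
qed

end
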